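(* Let $\hat H(w)=e^{-w}$, and let $\alpha,\beta\in\mathbb{R}$ with $\beta>1$ and $\beta>\alpha^2/4$. For $\tilde\tau>0$ and $\omega>0$, the number $i\omega$ is a root of $\Phi(w)=0$ if and only if there exist $k\in\mathbb{Z}$ and a sign $\pm$ such that $$\omega=\omega_k^{\pm}:=\pm\tfrac12\arccos\frac{\alpha}{2\sqrt\beta}+k\pi-\arctan\sqrt{\sqrt\beta-1}\quad\text{and}\quad \tilde\tau=\frac{\omega_k^{\pm}}{\sqrt{\sqrt\beta-1}}.$$ If $\beta\le 1$ and $\beta>\alpha^2/4$, there is no $\tilde\tau>0$ for which $\Phi$ has a root $i\omega$ with $\omega>0$.
   Context: For a delay-to-time-constant ratio $\tilde\tau>0$ and $\alpha,\beta\in\mathbb{R}$, the rescaled characteristic equation of the linearized coupled Wilson–Cowan system with kernel transform $\hat H$ is $$\Phi(w):=(w+\tilde\tau)^4-\alpha\,\tilde\tau^2(w+\tilde\tau)^2\hat H(w)^2+\beta\,\tilde\tau^4\hat H(w)^4=0.$$ For the Dirac (discrete) delay kernel, $\hat H(w)=e^{-w}$. *)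

theory Defs
  imports Complex_Main
begin

text \<open>Kernel transform of the Dirac (discrete) delay kernel.\<close>
definition Hhat :: "complex \<Rightarrow> complex" where
  "Hhat w = exp (- w)"

definition Phi :: "real \<Rightarrow> real \<Rightarrow> real \<Rightarrow> complex \<Rightarrow> complex" where
  "Phi \<alpha> \<beta> \<tau> w =
     (w + of_real \<tau>) ^ 4
     - of_real \<alpha> * of_real \<tau> ^ 2 * (w + of_real \<tau>) ^ 2 * Hhat w ^ 2
     + of_real \<beta> * of_real \<tau> ^ 4 * Hhat w ^ 4"

text \<open>The critical frequencies omega_k^{+-}; s is the sign (1 or -1).\<close>
definition omega_crit :: "real \<Rightarrow> real \<Rightarrow> int \<Rightarrow> real \<Rightarrow> real" where
  "omega_crit \<alpha> \<beta> k s =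
     s * (1/2) * arccos (\<alpha> / (2 * sqrt \<beta>)) + of_int k * pi - arctan (sqrt (sqrt \<beta> - 1))"

end

theory Submission
  imports Defs
begin

lemma one_plus_ic: "1 + \<i> * complex_of_real c = complex_of_real (sqrt (1 + c^2)) * cis (arctan c)"
proof -
  have "1 + c^2 > 0" by (simp add: add_pos_nonneg)
  thus ?thesis by (simp add: complex_eq_iff cos_arctan sin_arctan)
qed

lemma cis_period: "cis (b + 2*pi*of_int m) = cis b"
  by (simp add: complex_eq_iff cos_add sin_add)

lemma cis_eq:
  assumes "r1 > 0" "r2 > 0"
  shows "(complex_of_real r1 * cis a = complex_of_real r2 * cis b) \<longleftrightarrow> r1 = r2 \<and> (\<exists>m::int. a = b + 2*pi*of_int m)"
proof
  assume h: "complex_of_real r1 * cis a = complex_of_real r2 * cis b"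
  have "norm (complex_of_real r1 * cis a) = norm (complex_of_real r2 * cis b)" using h by simp
  hence r: "r1 = r2" using assms by (simp add: norm_mult)
  hence "cis a = cis b" using h assms by simp
  hence "cis (a - b) = 1" by (simp add: cis_divide[symmetric])
  hence "cos (a - b) = 1" by (metis cis.simps(1) one_complex.simps(1))
  hence "\<exists>x::int. a - b = x * 2 * pi" using cos_one_2pi_int[of "a-b"] by blast
  then obtain x::int where "a - b = real_of_int x * 2 * pi" by blast
  thus "r1 = r2 \<and> (\<exists>m::int. a = b + 2*pi*of_int m)" using r by (intro conjI exI[of _ x]) (auto simp: algebra_simps)
next
  assume "r1 = r2 \<and> (\<exists>m::int. a = b + 2*pi*of_int m)"
  thus "complex_of_real r1 * cis a = complex_of_real r2 * cis b" using cis_period by auto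
qed

lemma quad_factor:
  fixes \<alpha> \<beta> :: real
  assumes "\<beta> > \<alpha>^2/4"
  defines "\<theta> \<equiv> arccos (\<alpha> / (2 * sqrt \<beta>))"
  shows "z^2 - of_real \<alpha> * z + of_real \<beta> = (z - of_real (sqrt \<beta>) * cis \<theta>) * (z - of_real (sqrt \<beta>) * cis (-\<theta>))"
proof -
  have b0: "\<beta> > 0" using assms(1) by (smt (verit) zero_le_power2 divide_nonneg_pos)
  have "\<alpha>^2 < (2 * sqrt \<beta>)^2" using assms(1) b0 by (simp add: power_mult_distrib)
  hence "\<bar>\<alpha>\<bar> < 2 * sqrt \<beta>" using b0 power2_less_imp_less[of "\<bar>\<alpha>\<bar>" "2*sqrt \<beta>"] by simp
  hence "\<bar>\<alpha> / (2 * sqrt \<beta>)\<bar> \<le> 1" using b0 by (simp add: abs_divide)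
  hence c: "cos \<theta> = \<alpha> / (2 * sqrt \<beta>)" unfolding \<theta>_def by (simp add: cos_arccos_abs)
  have s: "of_real (sqrt \<beta>) * cis \<theta> + of_real (sqrt \<beta>) * cis (-\<theta>) = complex_of_real \<alpha>"
    using c b0 by (simp add: complex_eq_iff)
  have sb: "complex_of_real (sqrt \<beta>) * complex_of_real (sqrt \<beta>) = complex_of_real \<beta>" using b0 by (simp flip: of_real_mult)
  have p: "(of_real (sqrt \<beta>) * cis \<theta>) * (of_real (sqrt \<beta>) * cis (-\<theta>)) = complex_of_real \<beta>"
  proof -
    have "(of_real (sqrt \<beta>) * cis \<theta>) * (of_real (sqrt \<beta>) * cis (-\<theta>)) = (of_real (sqrt \<beta>) * of_real (sqrt \<beta>)) * (cis \<theta> * cis (-\<theta>))"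
      by (simp add: algebra_simps)
    also have "\<dots> = of_real \<beta>" using sb by (simp add: cis_mult)
    finally show ?thesis .
  qed
  show ?thesis by (simp add: algebra_simps power2_eq_square flip: s p)
qed

lemma gen_id:
  fixes T y I E a b :: complex
  assumes "I * E = 1"
  shows "(T*y)^4 - a*T^2*(T*y)^2*I^2 + b*T^4*I^4 = T^4 * I^4 * (((y*E)^2)^2 - a*(y*E)^2 + b)"
proof -
  have "T^4 * I^4 * (((y*E)^2)^2 - a*(y*E)^2 + b) = T^4*y^4*(I*E)^4 - a*T^4*y^2*I^2*(I*E)^2 + b*T^4*I^4"
    by algebra
  also have "\<dots> = T^4*y^4 - a*T^4*y^2*I^2 + b*T^4*I^4" using assms by simp
  also have "\<dots> = (T*y)^4 - a*T^2*(T*y)^2*I^2 + b*T^4*I^4" by algebra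
  finally show ?thesis by simp
qed

lemma phi_factor:
  assumes "\<tau> > 0"
  shows "Phi \<alpha> \<beta> \<tau> (\<i> * of_real \<omega>) = of_real \<tau> ^ 4 * inverse (exp (\<i> * of_real \<omega>)) ^ 4 *
     ((((1 + \<i> * of_real (\<omega>/\<tau>)) * exp (\<i> * of_real \<omega>))^2)^2 - of_real \<alpha> * ((1 + \<i> * of_real (\<omega>/\<tau>)) * exp (\<i> * of_real \<omega>))^2 + of_real \<beta>)"
proof -
  define E where "E = exp (\<i> * of_real \<omega>)"
  have E0: "E \<noteq> 0" unfolding E_def by simp
  have h: "Hhat (\<i> * of_real \<omega>) = inverse E" unfolding Hhat_def E_def by (simp add: exp_minus)
  have w: "\<i> * of_real \<omega> + of_real \<tau> = of_real \<tau> * (1 + \<i> * of_real (\<omega>/\<tau>))"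
  proof -
    have "complex_of_real \<tau> \<noteq> 0" using assms by simp
    thus ?thesis by (simp add: field_simps)
  qed
  show ?thesis unfolding Phi_def h w E_def[symmetric]
    by (rule gen_id) (use E0 in simp)
qed

lemma Q_polar:
  "((1 + \<i> * of_real c) * exp (\<i> * of_real \<omega>))^2 = of_real (1 + c^2) * cis (2 * (arctan c + \<omega>))"
proof -
  have "(1 + \<i> * of_real c) * exp (\<i> * of_real \<omega>) = of_real (sqrt (1 + c^2)) * cis (arctan c + \<omega>)"
    by (simp add: one_plus_ic cis_conv_exp[symmetric] cis_mult[symmetric] mult.assoc)
  hence "((1 + \<i> * of_real c) * exp (\<i> * of_real \<omega>))^2 = of_real (sqrt (1 + c^2))^2 * cis (arctan c + \<omega>)^2"
    by (simp add: power_mult_distrib)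
  also have "\<dots> = of_real (1 + c^2) * cis (2 * (arctan c + \<omega>))"
  proof -
    have "(1::real) + c^2 \<ge> 0" by simp
    hence "of_real (sqrt (1 + c^2))^2 = (of_real (1 + c^2) :: complex)" by (simp flip: of_real_power)
    thus ?thesis by (simp add: DeMoivre)
  qed
  finally show ?thesis .
qed

theorem mainTheorem7:
  fixes \<alpha> \<beta> :: real
  shows "(\<beta> > 1 \<and> \<beta> > \<alpha>\<^sup>2 / 4 \<longrightarrow>
           (\<forall>\<tau> \<omega> :: real. \<tau> > 0 \<longrightarrow> \<omega> > 0 \<longrightarrow>
              (Phi \<alpha> \<beta> \<tau> (\<i> * of_real \<omega>) = 0 \<longleftrightarrow>
                (\<exists>k :: int. \<exists>s \<in> {1, -1 :: real}.
                   \<omega> = omega_crit \<alpha> \<beta> k s \<and>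
                   \<tau> = omega_crit \<alpha> \<beta> k s / sqrt (sqrt \<beta> - 1)))))
       \<and> (\<beta> \<le> 1 \<and> \<beta> > \<alpha>\<^sup>2 / 4 \<longrightarrow>
           \<not> (\<exists>\<tau> \<omega> :: real. \<tau> > 0 \<and> \<omega> > 0 \<and> Phi \<alpha> \<beta> \<tau> (\<i> * of_real \<omega>) = 0))"
  
proof (intro conjI impI allI)
  fix \<tau> \<omega> :: real
  assume hb: "1 < \<beta> \<and> \<alpha>\<^sup>2 / 4 < \<beta>" and t: "0 < \<tau>" and w: "0 < \<omega>"
  define c where "c = \<omega>/\<tau>"
  define c0 where "c0 = sqrt (sqrt \<beta> - 1)"
  define \<theta> where "\<theta> = arccos (\<alpha> / (2 * sqrt \<beta>))"
  define x where "x = 2 * (arctan c + \<omega>)"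
  define Q where "Q = ((1 + \<i> * of_real c) * exp (\<i> * of_real \<omega>))^2"
  have cpos: "c > 0" unfolding c_def using t w by simp
  have sb: "sqrt \<beta> > 1" using hb by simp
  have c0pos: "c0 > 0" unfolding c0_def using sb by simp
  have Qp: "Q = of_real (1 + c^2) * cis x" unfolding Q_def x_def by (rule Q_polar)
  have pos1: "1 + c^2 > 0" by (simp add: add_pos_nonneg)
  have sbp: "sqrt \<beta> > 0" using sb by simp
  have "Phi \<alpha> \<beta> \<tau> (\<i> * of_real \<omega>) = 0 \<longleftrightarrow> Q^2 - of_real \<alpha> * Q + of_real \<beta> = 0"
    using phi_factor[OF t, of \<alpha> \<beta> \<omega>] t unfolding Q_def c_def by simp
  also have "\<dots> \<longleftrightarrow> Q = of_real (sqrt \<beta>) * cis \<theta> \<or> Q = of_real (sqrt \<beta>) * cis (-\<theta>)"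
    using quad_factor[of \<alpha> \<beta> Q] hb unfolding \<theta>_def by simp
  also have "\<dots> \<longleftrightarrow> 1 + c^2 = sqrt \<beta> \<and> (\<exists>m::int. x = \<theta> + 2*pi*of_int m \<or> x = -\<theta> + 2*pi*of_int m)"
    unfolding Qp using cis_eq[OF pos1 sbp] by blast
  also have "\<dots> \<longleftrightarrow> c = c0 \<and> (\<exists>m::int. x = \<theta> + 2*pi*of_int m \<or> x = -\<theta> + 2*pi*of_int m)"
  proof -
    have "1 + c^2 = sqrt \<beta> \<longleftrightarrow> c = c0"
    proof
      assume "1 + c^2 = sqrt \<beta>"
      hence "c^2 = sqrt \<beta> - 1" by simp
      thus "c = c0" unfolding c0_def using cpos by (metis less_imp_le real_sqrt_unique)
    next
      assume "c = c0"
      thus "1 + c^2 = sqrt \<beta>" unfolding c0_def using sb by simp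
    qed
    thus ?thesis by simp
  qed
  also have "\<dots> \<longleftrightarrow> (\<exists>k :: int. \<exists>s \<in> {1, -1 :: real}.
                   \<omega> = omega_crit \<alpha> \<beta> k s \<and>
                   \<tau> = omega_crit \<alpha> \<beta> k s / sqrt (sqrt \<beta> - 1))"
  proof
    assume "c = c0 \<and> (\<exists>m::int. x = \<theta> + 2*pi*of_int m \<or> x = -\<theta> + 2*pi*of_int m)"
    then obtain m :: int where cc: "c = c0" and m: "x = \<theta> + 2*pi*of_int m \<or> x = -\<theta> + 2*pi*of_int m" by blast
    have tt: "\<tau> = \<omega> / c0" using cc t c0pos unfolding c_def by (simp add: field_simps)
    from m show "\<exists>k :: int. \<exists>s \<in> {1, -1 :: real}. \<omega> = omega_crit \<alpha> \<beta> k s \<and> \<tau> = omega_crit \<alpha> \<beta> k s / sqrt (sqrt \<beta> - 1)"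
    proof
      assume "x = \<theta> + 2*pi*of_int m"
      hence e: "\<omega> = omega_crit \<alpha> \<beta> m 1"
        unfolding omega_crit_def x_def \<theta>_def[symmetric] c0_def[symmetric] cc[symmetric] by (simp add: field_simps)
      show ?thesis by (rule exI[of _ m], rule bexI[of _ 1]) (use e tt c0_def in auto)
    next
      assume "x = -\<theta> + 2*pi*of_int m"
      hence e: "\<omega> = omega_crit \<alpha> \<beta> m (-1)"
        unfolding omega_crit_def x_def \<theta>_def[symmetric] c0_def[symmetric] cc[symmetric] by (simp add: field_simps)
      show ?thesis by (rule exI[of _ m], rule bexI[of _ "-1"]) (use e tt c0_def in auto)
    qed
  next
    assume "\<exists>k :: int. \<exists>s \<in> {1, -1 :: real}. \<omega> = omega_crit \<alpha> \<beta> k s \<and> \<tau> = omega_crit \<alpha> \<beta> k s / sqrt (sqrt \<beta> - 1)"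
    then obtain k :: int and s where s: "s \<in> {1, -1 :: real}" and e: "\<omega> = omega_crit \<alpha> \<beta> k s"
      and tt: "\<tau> = omega_crit \<alpha> \<beta> k s / sqrt (sqrt \<beta> - 1)" by blast
    have "\<tau> = \<omega> / c0" using tt e unfolding c0_def by simp
    hence cc: "c = c0" unfolding c_def using w c0pos by simp
    have "x = s * \<theta> + 2*pi*of_int k"
      using e unfolding x_def omega_crit_def \<theta>_def[symmetric] c0_def[symmetric] cc by (simp add: algebra_simps)
    thus "c = c0 \<and> (\<exists>m::int. x = \<theta> + 2*pi*of_int m \<or> x = -\<theta> + 2*pi*of_int m)"
      using cc s by auto
  qed
  finally show "Phi \<alpha> \<beta> \<tau> (\<i> * of_real \<omega>) = 0 \<longleftrightarrow> (\<exists>k :: int. \<exists>s \<in> {1, -1 :: real}.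
                   \<omega> = omega_crit \<alpha> \<beta> k s \<and>
                   \<tau> = omega_crit \<alpha> \<beta> k s / sqrt (sqrt \<beta> - 1))" .
next
  assume hb: "\<beta> \<le> 1 \<and> \<alpha>\<^sup>2 / 4 < \<beta>"
  show "\<not> (\<exists>\<tau> \<omega> :: real. \<tau> > 0 \<and> \<omega> > 0 \<and> Phi \<alpha> \<beta> \<tau> (\<i> * of_real \<omega>) = 0)"
  proof
    assume "\<exists>\<tau> \<omega> :: real. \<tau> > 0 \<and> \<omega> > 0 \<and> Phi \<alpha> \<beta> \<tau> (\<i> * of_real \<omega>) = 0"
    then obtain \<tau> \<omega> :: real where t: "\<tau> > 0" and w: "\<omega> > 0" and z: "Phi \<alpha> \<beta> \<tau> (\<i> * of_real \<omega>) = 0" by blast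
    define c where "c = \<omega>/\<tau>"
    define \<theta> where "\<theta> = arccos (\<alpha> / (2 * sqrt \<beta>))"
    define x where "x = 2 * (arctan c + \<omega>)"
    define Q where "Q = ((1 + \<i> * of_real c) * exp (\<i> * of_real \<omega>))^2"
    have cpos: "c > 0" unfolding c_def using t w by simp
    have b0: "\<beta> > 0" using hb by (smt (verit) zero_le_power2 divide_nonneg_pos)
    have sbp: "sqrt \<beta> > 0" using b0 by simp
    have sb1: "sqrt \<beta> \<le> 1" using hb b0 by simp
    have Qp: "Q = of_real (1 + c^2) * cis x" unfolding Q_def x_def by (rule Q_polar)
    have pos1: "1 + c^2 > 0" by (simp add: add_pos_nonneg)
    have "Q^2 - of_real \<alpha> * Q + of_real \<beta> = 0"
      using z phi_factor[OF t, of \<alpha> \<beta> \<omega>] t unfolding Q_def c_def by simp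
    hence "Q = of_real (sqrt \<beta>) * cis \<theta> \<or> Q = of_real (sqrt \<beta>) * cis (-\<theta>)"
      using quad_factor[of \<alpha> \<beta> Q] hb unfolding \<theta>_def by simp
    hence "1 + c^2 = sqrt \<beta>" unfolding Qp using cis_eq[OF pos1 sbp] by blast
    moreover have "c^2 > 0" using cpos by simp
    ultimately show False using sb1 by simp
  qed
qed

end
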